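(* Let $q$ be a prime power and let $n,k$ be integers with $3\le k\le n-2\le q-2$. Let $\Lambda=\{\alpha_1,\dots,\alpha_n\}\subseteq\mathbb{F}_q$ with the $\alpha_i$ pairwise distinct, and let $C_{k-1,k-2}$ be the linear code generated by the $k\times n$ matrix whose rows are $(\alpha_1^{e},\dots,\alpha_n^{e})$ for $e=0,1,\dots,k-3,k,k+1$. Then $C_{k-1,k-2}$ is MDS if and only if $$\sigma_2(\beta_1,\dots,\beta_k)^2-\sigma_1(\beta_1,\dots,\beta_k)\,\sigma_3(\beta_1,\dots,\beta_k)\neq 0$$ for every $k$-element subset $\{\beta_1,\dots,\beta_k\}\subseteq\Lambda$ (with the $\beta_i$ distinct).
   Context: Convention: $0^0=1$. $\sigma_t(x_1,\dots,x_m)$ denotes the $t$-th elementary symmetric polynomial ($\sigma_0=1$, $\sigma_t=0$ for $t>m$). An $[n,k,d]$ linear code is MDS if $d=n-k+1$. *)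

theory Defs
  imports Main
begin

definition esym :: "nat \<Rightarrow> 'a::comm_ring_1 set \<Rightarrow> 'a" where
  "esym t B = (\<Sum>S\<in>{S. S \<subseteq> B \<and> card S = t}. \<Prod>S)"

definition gen_code :: "nat \<Rightarrow> nat \<Rightarrow> (nat \<Rightarrow> nat \<Rightarrow> 'a::field) \<Rightarrow> 'a list set" where
  "gen_code r n G = {map (\<lambda>i. \<Sum>j<r. c j * G j i) [0..<n] | c. True}"

definition hweight :: "'a::zero list \<Rightarrow> nat" where
  "hweight w = length (filter (\<lambda>x. x \<noteq> 0) w)"

definition min_dist :: "'a::zero list set \<Rightarrow> nat" where
  "min_dist C = Min {hweight w | w. w \<in> C \<and> (\<exists>x\<in>set w. x \<noteq> 0)}"

definition code_dim :: "'a::{finite,field} list set \<Rightarrow> nat" where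
  "code_dim C = (THE m. card C = card (UNIV::'a set) ^ m)"

definition is_MDS :: "nat \<Rightarrow> 'a::{finite,field} list set \<Rightarrow> bool" where
  "is_MDS n C \<longleftrightarrow> min_dist C = n - code_dim C + 1"

definition row_exp :: "nat \<Rightarrow> nat \<Rightarrow> nat" where
  "row_exp k j = (if j < k - 2 then j else j + 2)"

definition code_C :: "nat \<Rightarrow> nat \<Rightarrow> (nat \<Rightarrow> 'a::field) \<Rightarrow> 'a list set" where
  "code_C n k \<alpha> = gen_code k n (\<lambda>j i. \<alpha> i ^ row_exp k j)"

end

theory Submission
  imports Defs "HOL-Computational_Algebra.Polynomial"
begin


lemma esym_gt: "finite B \<Longrightarrow> card B < t \<Longrightarrow> esym t B = 0"
proof -
  assume "finite B" "card B < t"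
  have cm: "S \<subseteq> B \<Longrightarrow> card S \<le> card B" for S using card_mono[OF \<open>finite B\<close>] .
  have "\<not> (S \<subseteq> B \<and> card S = t)" for S
  proof
    assume "S \<subseteq> B \<and> card S = t"
    then show False using cm[of S] \<open>card B < t\<close> by simp
  qed
  then have E: "{S. S \<subseteq> B \<and> card S = t} = {}" by blast
  show ?thesis unfolding esym_def E by simp
qed

lemma esym_0: "finite B \<Longrightarrow> esym 0 B = 1"
proof -
  assume "finite B"
  have "S \<subseteq> B \<Longrightarrow> finite S" for S using finite_subset \<open>finite B\<close> by blast
  then have "{S. S \<subseteq> B \<and> card S = 0} = {{}}"
    by auto
  then show ?thesis by (simp add: esym_def)
qed

lemma esym_insert:
  assumes "finite B" "x \<notin> B"
  shows "esym (Suc t) (insert x B) = esym (Suc t) B + x * esym t B"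
proof -
  have eq: "{S. S \<subseteq> insert x B \<and> card S = Suc t} =
     {S. S \<subseteq> B \<and> card S = Suc t} \<union> insert x ` {S. S \<subseteq> B \<and> card S = t}"
  proof (rule set_eqI, rule iffI)
    fix S assume S: "S \<in> {S. S \<subseteq> insert x B \<and> card S = Suc t}"
    then have fS: "finite S" using assms finite_subset by auto
    show "S \<in> {S. S \<subseteq> B \<and> card S = Suc t} \<union> insert x ` {S. S \<subseteq> B \<and> card S = t}"
    proof (cases "x \<in> S")
      case True
      then have "S = insert x (S - {x})" by auto
      moreover have "S - {x} \<subseteq> B" using S by auto
      moreover have "card (S - {x}) = t" using S True fS by simp
      ultimately show ?thesis by blast
    next
      case False then show ?thesis using S by auto
    qed
  next
    fix S assume "S \<in> {S. S \<subseteq> B \<and> card S = Suc t} \<union> insert x ` {S. S \<subseteq> B \<and> card S = t}"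
    then show "S \<in> {S. S \<subseteq> insert x B \<and> card S = Suc t}"
    proof
      assume "S \<in> {S. S \<subseteq> B \<and> card S = Suc t}" then show ?thesis by auto
    next
      assume "S \<in> insert x ` {S. S \<subseteq> B \<and> card S = t}"
      then obtain T where T: "T \<subseteq> B" "card T = t" "S = insert x T" by auto
      then have "finite T" "x \<notin> T" using assms finite_subset by auto
      then show ?thesis using T by auto
    qed
  qed
  have f1: "finite {S. S \<subseteq> B \<and> card S = Suc t}" using assms by simp
  have f2: "finite {S. S \<subseteq> B \<and> card S = t}" using assms by simp
  have disj: "{S. S \<subseteq> B \<and> card S = Suc t} \<inter> insert x ` {S. S \<subseteq> B \<and> card S = t} = {}"
    using assms by auto
  have inj: "inj_on (insert x) {S. S \<subseteq> B \<and> card S = t}"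
  proof (rule inj_onI)
    fix X Y assume "X \<in> {S. S \<subseteq> B \<and> card S = t}" "Y \<in> {S. S \<subseteq> B \<and> card S = t}" "insert x X = insert x Y"
    then have "x \<notin> X" "x \<notin> Y" using assms by auto
    then show "X = Y" using \<open>insert x X = insert x Y\<close> by (metis Diff_insert_absorb)
  qed
  have "esym (Suc t) (insert x B) = (\<Sum>S\<in>{S. S \<subseteq> B \<and> card S = Suc t}. \<Prod>S)
        + (\<Sum>S\<in>insert x ` {S. S \<subseteq> B \<and> card S = t}. \<Prod>S)"
    unfolding esym_def eq using f1 f2 disj by (simp add: sum.union_disjoint)
  also have "(\<Sum>S\<in>insert x ` {S. S \<subseteq> B \<and> card S = t}. \<Prod>S)
      = (\<Sum>S\<in>{S. S \<subseteq> B \<and> card S = t}. x * \<Prod>S)"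
  proof -
    have "(\<Sum>S\<in>insert x ` {S. S \<subseteq> B \<and> card S = t}. \<Prod>S) = (\<Sum>S\<in>{S. S \<subseteq> B \<and> card S = t}. \<Prod>(insert x S))"
      by (simp add: sum.reindex[OF inj])
    also have "\<dots> = (\<Sum>S\<in>{S. S \<subseteq> B \<and> card S = t}. x * \<Prod>S)"
    proof (rule sum.cong[OF refl])
    fix S assume "S \<in> {S. S \<subseteq> B \<and> card S = t}"
    then have "finite S" "x \<notin> S" using assms finite_subset by auto
    then show "\<Prod>(insert x S) = x * \<Prod>S" by simp
  qed
  finally show ?thesis .
  qed
  finally show ?thesis by (simp add: esym_def sum_distrib_left)
qed

definition PB :: "'a::comm_ring_1 set \<Rightarrow> 'a poly" where
  "PB B = (\<Prod>b\<in>B. [:-b, 1:])"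

lemma vieta_aux: "- x * (A * E0) + (- A) * E1 = (- A) * (E1 + x * (E0::'a::comm_ring_1))"
  by (simp add: algebra_simps)

lemma vieta:
  assumes "finite B"
  shows "coeff (PB B) i = (if i \<le> card B then (-1)^(card B - i) * esym (card B - i) B else 0)"
  using assms
proof (induction B arbitrary: i rule: finite_induct)
  case empty
  then show ?case by (simp add: PB_def esym_0 coeff_1)
next
  case (insert x B)
  let ?m = "card B"
  have PBi: "PB (insert x B) = smult (-x) (PB B) + pCons 0 (PB B)"
    using insert by (simp add: PB_def)
  have cm: "card (insert x B) = Suc ?m" using insert by simp
  have ci: "coeff (PB (insert x B)) i = - x * coeff (PB B) i + (case i of 0 \<Rightarrow> 0 | Suc j \<Rightarrow> coeff (PB B) j)" for i
    unfolding PBi by (simp add: coeff_pCons)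
  have IH: "coeff (PB B) i = (if i \<le> ?m then (-1)^(?m - i) * esym (?m - i) B else 0)" for i
    by (rule insert.IH)
  show ?case
  proof (cases i)
    case 0
    have "coeff (PB (insert x B)) i = - x * ((-1)^?m * esym ?m B)"
      using ci[of i] IH[of 0] 0 by simp
    also have "\<dots> = (-1)^(Suc ?m) * (esym (Suc ?m) B + x * esym ?m B)"
      using esym_gt[OF insert.hyps(1), of "Suc ?m"] by simp
    also have "\<dots> = (-1)^(Suc ?m) * esym (Suc ?m) (insert x B)"
      using esym_insert[OF insert.hyps] by simp
    finally show ?thesis using 0 cm by simp
  next
    case (Suc j)
    show ?thesis
    proof (cases "j < ?m")
      case True
      define r where "r = ?m - i"
      have e: "Suc ?m - i = Suc r" "?m - j = Suc r" using Suc True by (auto simp: r_def)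
      have c1: "coeff (PB B) i = (-1)^r * esym r B" using IH[of i] Suc True by (simp add: r_def)
      have c2: "coeff (PB B) j = (- ((-1)^r)) * esym (Suc r) B" using IH[of j] True e(2) by simp
      have "coeff (PB (insert x B)) i = - x * ((-1)^r * esym r B) + (- ((-1)^r)) * esym (Suc r) B"
        using ci[of i] c1 c2 Suc by simp
      also have "\<dots> = (- ((-1)^r)) * (esym (Suc r) B + x * esym r B)" by (rule vieta_aux)
      also have "\<dots> = (-1)^(Suc r) * esym (Suc r) (insert x B)"
        using esym_insert[OF insert.hyps] by simp
      finally show ?thesis using cm e Suc True by simp
    next
      case False
      show ?thesis
      proof (cases "j = ?m")
        case True
        have "coeff (PB (insert x B)) i = 1"
          using ci[of i] IH[of i] IH[of j] Suc True by (simp add: esym_0 insert.hyps)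
        then show ?thesis using cm Suc True insert.hyps by (simp add: esym_0)
      next
        case False
        then have "?m < j" using \<open>\<not> j < ?m\<close> by simp
        then have "coeff (PB (insert x B)) i = 0"
          using ci[of i] IH[of i] IH[of j] Suc by simp
        then show ?thesis using cm Suc \<open>?m < j\<close> by simp
      qed
    qed
  qed
qed

lemma PB_dvd:
  fixes f :: "'a::idom poly"
  assumes "finite B" "\<forall>b\<in>B. poly f b = 0"
  shows "PB B dvd f"
  using assms
proof (induction B arbitrary: f rule: finite_induct)
  case empty
  then show ?case by (simp add: PB_def)
next
  case (insert x B)
  then have "[:-x, 1:] dvd f" by (simp add: poly_eq_0_iff_dvd[symmetric])
  then obtain g where g: "f = [:-x, 1:] * g" by (elim dvdE)
  have "\<forall>b\<in>B. poly g b = 0"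
  proof
    fix b assume "b \<in> B"
    then have "poly f b = 0" "b \<noteq> x" using insert by auto
    then show "poly g b = 0" using g by simp
  qed
  then have "PB B dvd g" using insert.IH by blast
  then have "[:-x, 1:] * PB B dvd f" unfolding g by (rule mult_dvd_mono[OF dvd_refl])
  moreover have "PB (insert x B) = [:-x, 1:] * PB B" using insert.hyps by (simp add: PB_def)
  ultimately show ?case by simp
qed

lemma coeff_PB_top: "finite B \<Longrightarrow> coeff (PB B) (card B) = 1"
  by (simp add: vieta esym_0)

lemma degree_PB: "finite B \<Longrightarrow> degree (PB B) = card B"
proof -
  assume f: "finite B"
  have "degree (PB B) \<le> card B"
    by (rule degree_le) (simp add: vieta f)
  moreover have "card B \<le> degree (PB B)"
    by (rule le_degree) (simp add: coeff_PB_top f)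
  ultimately show ?thesis by simp
qed

lemma PB_nz: "finite B \<Longrightarrow> PB B \<noteq> 0"
  using coeff_PB_top by force

lemma PB_root: "finite B \<Longrightarrow> b \<in> B \<Longrightarrow> poly (PB B) (b::'a::idom) = 0"
  by (auto simp: PB_def poly_prod prod_zero_iff)

lemma coeff_lin_mult:
  "coeff (P * [:a, b:]) (Suc m) = a * coeff P (Suc m) + b * coeff P m"
  by (simp add: algebra_simps)

lemma key:
  fixes B :: "'a::field set"
  assumes fB: "finite B" and cB: "card B = k" and k3: "3 \<le> k"
  shows "(\<exists>f. f \<noteq> 0 \<and> degree f \<le> k + 1 \<and> coeff f (k - 2) = 0 \<and> coeff f (k - 1) = 0
            \<and> (\<forall>b\<in>B. poly f b = 0))
         \<longleftrightarrow> (esym 2 B)^2 - esym 1 B * esym 3 B = 0"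
proof -
  let ?P = "PB B"
  define e1 where "e1 = esym 1 B"
  define e2 where "e2 = esym 2 B"
  define e3 where "e3 = esym 3 B"
  have p1: "coeff ?P (k - 1) = - e1" using k3 by (simp add: vieta fB cB e1_def)
  have p2: "coeff ?P (k - 2) = e2" using k3 by (simp add: vieta fB cB e2_def)
  have p3: "coeff ?P (k - 3) = - e3" using k3 by (simp add: vieta fB cB e3_def)
  have s1: "k - 1 = Suc (k - 2)" and s2: "k - 2 = Suc (k - 3)" using k3 by auto
  have c1: "coeff (?P * [:a, b:]) (k - 1) = - a * e1 + b * e2" for a b
    using coeff_lin_mult[of ?P a b "k-2"] by (simp only: s1[symmetric] p1 p2) simp
  have c2: "coeff (?P * [:a, b:]) (k - 2) = a * e2 - b * e3" for a b
    using coeff_lin_mult[of ?P a b "k-3"] by (simp only: s2[symmetric] p3 p2) simp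
  show ?thesis unfolding e1_def[symmetric] e2_def[symmetric] e3_def[symmetric]
  proof
    assume "\<exists>f. f \<noteq> 0 \<and> degree f \<le> k + 1 \<and> coeff f (k - 2) = 0 \<and> coeff f (k - 1) = 0
            \<and> (\<forall>b\<in>B. poly f b = 0)"
    then obtain f where f: "f \<noteq> 0" "degree f \<le> k + 1" "coeff f (k - 2) = 0" "coeff f (k - 1) = 0"
       "\<forall>b\<in>B. poly f b = 0" by blast
    have "?P dvd f" using PB_dvd fB f(5) by blast
    then obtain g where g: "f = ?P * g" by (elim dvdE)
    have gnz: "g \<noteq> 0" using g f(1) by auto
    have "degree f = k + degree g" using g gnz PB_nz[OF fB] degree_mult_eq degree_PB[OF fB] cB by metis
    then have dg: "degree g \<le> 1" using f(2) by simp
    define a where "a = coeff g 0"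
    define b where "b = coeff g 1"
    have "g = [:a, b:]"
    proof (rule poly_eqI)
      fix n show "coeff g n = coeff [:a, b:] n"
        using dg coeff_eq_0[of g n] by (cases n) (auto simp: a_def b_def coeff_pCons split: nat.split)
    qed
    then have fab: "f = ?P * [:a, b:]" using g by simp
    have ab: "a \<noteq> 0 \<or> b \<noteq> 0" using gnz \<open>g = [:a, b:]\<close> by auto
    have E1: "a * e1 = b * e2" using f(4) c1[of a b] fab by (simp add: algebra_simps)
    have E2: "a * e2 = b * e3" using f(3) c2[of a b] fab by (simp add: algebra_simps)
    have "a * (e2^2 - e1 * e3) = 0"
    proof -
      have "a * (e2^2 - e1 * e3) = e2 * (a * e2) - e3 * (a * e1)" by (simp add: algebra_simps power2_eq_square)
      also have "\<dots> = 0" using E1 E2 by (simp add: algebra_simps)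
      finally show ?thesis .
    qed
    moreover have "b * (e2^2 - e1 * e3) = 0"
    proof -
      have "b * (e2^2 - e1 * e3) = e2 * (a * e1) - e1 * (a * e2)" using E1 E2 by (simp add: algebra_simps power2_eq_square)
      also have "\<dots> = 0" by (simp add: algebra_simps)
      finally show ?thesis .
    qed
    ultimately show "e2^2 - e1 * e3 = 0" using ab by auto
  next
    assume D: "e2^2 - e1 * e3 = 0"
    obtain a b where ab: "a \<noteq> 0 \<or> b \<noteq> 0" "a * e1 = b * e2" "a * e2 = b * e3"
    proof (cases "e2 = 0 \<and> e1 = 0")
      case True
      then show ?thesis using that[of 1 0] by simp
    next
      case False
      then show ?thesis using that[of e2 e1] D by (auto simp: algebra_simps power2_eq_square)
    qed
    define f where "f = ?P * [:a, b:]"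
    have "[:a, b:] \<noteq> 0" using ab(1) by auto
    then have "f \<noteq> 0" unfolding f_def using PB_nz[OF fB] by (metis mult_eq_0_iff)
    moreover have "degree f \<le> k + 1"
    proof -
      have "degree f \<le> degree ?P + degree [:a, b:]" unfolding f_def by (rule degree_mult_le)
      moreover have "degree [:a, b:] \<le> 1" by simp
      ultimately show ?thesis using degree_PB[OF fB] cB by simp
    qed
    moreover have "coeff f (k - 2) = 0"
    proof -
      have "coeff f (k - 2) = a * e2 - b * e3" unfolding f_def by (rule c2)
      then show ?thesis using ab by simp
    qed
    moreover have "coeff f (k - 1) = 0"
    proof -
      have "coeff f (k - 1) = - a * e1 + b * e2" unfolding f_def by (rule c1)
      then show ?thesis using ab by simp
    qed
    moreover have "\<forall>b\<in>B. poly f b = 0" using PB_root[OF fB] by (simp add: f_def)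
    ultimately show "\<exists>f. f \<noteq> 0 \<and> degree f \<le> k + 1 \<and> coeff f (k - 2) = 0 \<and> coeff f (k - 1) = 0
            \<and> (\<forall>b\<in>B. poly f b = 0)" by blast
  qed
qed



definition fp :: "nat \<Rightarrow> (nat \<Rightarrow> 'a::comm_ring_1) \<Rightarrow> 'a poly" where
  "fp k c = (\<Sum>j<k. monom (c j) (row_exp k j))"

definition rinv :: "nat \<Rightarrow> nat \<Rightarrow> nat" where
  "rinv k m = (if m < k - 2 then m else m - 2)"

definition rok :: "nat \<Rightarrow> nat \<Rightarrow> bool" where
  "rok k m = (m < k - 2 \<or> (k \<le> m \<and> m \<le> k + 1))"

lemma entry_poly: "(\<Sum>j<k. c j * x ^ row_exp k j) = poly (fp k c) x"
  by (simp add: fp_def poly_sum poly_monom)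

lemma row_exp_iff: "2 \<le> k \<Longrightarrow> j < k \<Longrightarrow> (row_exp k j = m) \<longleftrightarrow> (rok k m \<and> j = rinv k m)"
  by (auto simp: row_exp_def rok_def rinv_def)

lemma rok_rinv: "2 \<le> k \<Longrightarrow> rok k m \<Longrightarrow> rinv k m < k \<and> row_exp k (rinv k m) = m"
  by (auto simp: row_exp_def rok_def rinv_def)

lemma coeff_fp: assumes "2 \<le> k"
  shows "coeff (fp k c) m = (if rok k m then c (rinv k m) else 0)"
proof -
  have "coeff (fp k c) m = (\<Sum>j<k. (if row_exp k j = m then c j else 0))"
    by (simp add: fp_def coeff_sum)
  also have "\<dots> = (\<Sum>j<k. (if rok k m \<and> j = rinv k m then c j else 0))"
    by (rule sum.cong) (use row_exp_iff[OF assms] in auto)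
  also have "\<dots> = (if rok k m then c (rinv k m) else 0)"
    using rok_rinv[OF assms, of m] by (auto simp: sum.delta)
  finally show ?thesis .
qed

lemma coeff_fp_row: "2 \<le> k \<Longrightarrow> j < k \<Longrightarrow> coeff (fp k c) (row_exp k j) = c j"
  using row_exp_iff[of k j "row_exp k j"] by (simp add: coeff_fp)

lemma fp_props: assumes "2 \<le> k"
  shows "degree (fp k c) \<le> k + 1" "coeff (fp k c) (k - 2) = 0" "coeff (fp k c) (k - 1) = 0"
proof -
  show "degree (fp k c) \<le> k + 1"
    by (rule degree_le) (auto simp: coeff_fp[OF assms] rok_def)
  show "coeff (fp k c) (k - 2) = 0" "coeff (fp k c) (k - 1) = 0"
    using assms by (auto simp: coeff_fp[OF assms] rok_def)
qed

lemma span_fp: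
  assumes "2 \<le> k" "degree f \<le> k + 1" "coeff f (k - 2) = 0" "coeff f (k - 1) = 0"
  shows "f = fp k (\<lambda>j. coeff f (row_exp k j))"
proof (rule poly_eqI)
  fix m
  show "coeff f m = coeff (fp k (\<lambda>j. coeff f (row_exp k j))) m"
  proof (cases "rok k m")
    case True
    then show ?thesis using rok_rinv[OF assms(1) True] by (simp add: coeff_fp[OF assms(1)])
  next
    case False
    then have "m = k - 2 \<or> m = k - 1 \<or> m > k + 1" using assms(1) by (auto simp: rok_def)
    then have "coeff f m = 0" using assms coeff_eq_0[of f m] by auto
    then show ?thesis using False by (simp add: coeff_fp[OF assms(1)])
  qed
qed

lemma fp_diff: "fp k (\<lambda>j. c j - d j) = fp k c - fp k d"
  by (simp add: fp_def sum_subtractf diff_monom[symmetric])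

lemma fp_cong: "(\<And>j. j < k \<Longrightarrow> c j = d j) \<Longrightarrow> fp k c = fp k d"
  unfolding fp_def by (rule sum.cong) auto

lemma no_roots:
  fixes f :: "'a::field poly"
  assumes "inj_on \<alpha> {..<n}" "f \<noteq> 0" "degree f < n" "\<forall>i<n. poly f (\<alpha> i) = 0"
  shows False
proof -
  have "PB (\<alpha> ` {..<n}) dvd f" by (rule PB_dvd) (use assms(4) in auto)
  then have "degree (PB (\<alpha> ` {..<n})) \<le> degree f" using assms(2) by (rule dvd_imp_degree_le)
  moreover have "degree (PB (\<alpha> ` {..<n})) = n"
    using degree_PB[of "\<alpha> ` {..<n}"] card_image[OF assms(1)] by simp
  ultimately show False using assms(3) by simp
qed



lemma hweight_map:
  "hweight (map g [0..<n]) = card {i. i < n \<and> g i \<noteq> 0}"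
proof -
  have "{i. i < n \<and> map g [0..<n] ! i \<noteq> 0} = {i. i < n \<and> g i \<noteq> 0}" by auto
  then show ?thesis by (simp add: hweight_def length_filter_conv_card)
qed

lemma hweight_split:
  "hweight (map g [0..<n]) + card {i. i < n \<and> g i = 0} = n"
proof -
  have "{i. i < n \<and> g i \<noteq> 0} \<union> {i. i < n \<and> g i = 0} = {..<n}" by auto
  moreover have "{i. i < n \<and> g i \<noteq> 0} \<inter> {i. i < n \<and> g i = 0} = {}" by auto
  ultimately have "card {i. i < n \<and> g i \<noteq> 0} + card {i. i < n \<and> g i = 0} = n"
    by (metis (no_types, lifting) card_Un_disjoint card_lessThan finite_Collect_conjI finite_lessThan lessThan_def finite_nat_set_iff_bounded mem_Collect_eq)
  then show ?thesis by (simp add: hweight_map)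
qed

lemma arith_help: "k \<le> n \<Longrightarrow> (b::nat) < k \<Longrightarrow> a + b = n \<Longrightarrow> x = a \<Longrightarrow> n - k + 1 \<le> x"
  by linarith

theorem corollary3p5:
  fixes \<alpha> :: "nat \<Rightarrow> 'a::{finite,field}" and n k :: nat
  assumes "3 \<le> k" and "k + 2 \<le> n" and "n \<le> card (UNIV::'a set)"
    and "inj_on \<alpha> {..<n}"
  shows "is_MDS n (code_C n k \<alpha>) \<longleftrightarrow>
    (\<forall>B. B \<subseteq> \<alpha> ` {..<n} \<and> card B = k \<longrightarrow>
        (esym 2 B)^2 - esym 1 B * esym 3 B \<noteq> 0)"
proof -
  have k2: "2 \<le> k" using assms(1) by simp
  define \<Phi> where "\<Phi> c = map (\<lambda>i. poly (fp k c) (\<alpha> i)) [0..<n]" for c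
  define C where "C = code_C n k \<alpha>"
  have Ceq: "C = range \<Phi>"
    unfolding C_def code_C_def gen_code_def \<Phi>_def entry_poly by auto
  have len: "length (\<Phi> c) = n" for c by (simp add: \<Phi>_def)
  have nth\<Phi>: "i < n \<Longrightarrow> \<Phi> c ! i = poly (fp k c) (\<alpha> i)" for c i by (simp add: \<Phi>_def)
  have nz: "\<exists>i<n. poly (fp k c) (\<alpha> i) \<noteq> 0" if "fp k c \<noteq> 0" for c
  proof (rule ccontr)
    assume "\<not> (\<exists>i<n. poly (fp k c) (\<alpha> i) \<noteq> 0)"
    moreover have "degree (fp k c) < n" using fp_props(1)[OF k2, of c] assms(2) by simp
    ultimately show False using no_roots[OF assms(4) that] by blast
  qed
  have setnz: "(\<exists>x\<in>set (\<Phi> c). x \<noteq> 0) \<longleftrightarrow> (\<exists>i<n. poly (fp k c) (\<alpha> i) \<noteq> 0)" for c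
    by (auto simp: \<Phi>_def in_set_conv_nth)
  define q where "q = card (UNIV::'a set)"
  have q2: "2 \<le> q"
  proof -
    have "card {0::'a, 1} \<le> q" unfolding q_def by (rule card_mono) auto
    then show ?thesis by simp
  qed
  define L where "L = {xs::'a list. set xs \<subseteq> UNIV \<and> length xs = k}"
  have cardL: "card L = q ^ k" unfolding L_def q_def by (rule card_lists_length_eq) simp
  define g where "g xs = \<Phi> (\<lambda>j. xs ! j)" for xs :: "'a list"
  have CL: "C = g ` L"
  proof
    show "C \<subseteq> g ` L"
    proof
      fix w assume "w \<in> C"
      then obtain c where w: "w = \<Phi> c" using Ceq by auto
      have "fp k c = fp k (\<lambda>j. map c [0..<k] ! j)" by (rule fp_cong) simp
      then have "w = g (map c [0..<k])" by (simp add: w g_def \<Phi>_def)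
      moreover have "map c [0..<k] \<in> L" by (simp add: L_def)
      ultimately show "w \<in> g ` L" by blast
    qed
  next
    show "g ` L \<subseteq> C" using Ceq g_def by auto
  qed
  have injg: "inj_on g L"
  proof (rule inj_onI)
    fix xs ys assume xs: "xs \<in> L" and ys: "ys \<in> L" and e: "g xs = g ys"
    let ?d = "\<lambda>j. xs ! j - ys ! j"
    have "fp k ?d = 0"
    proof (rule ccontr)
      assume "fp k ?d \<noteq> 0"
      then obtain i where i: "i < n" "poly (fp k ?d) (\<alpha> i) \<noteq> 0" using nz by blast
      have "g xs ! i = g ys ! i" using e by simp
      then have "poly (fp k (\<lambda>j. xs ! j)) (\<alpha> i) = poly (fp k (\<lambda>j. ys ! j)) (\<alpha> i)"
        using i(1) by (simp add: g_def nth\<Phi>)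
      then show False using i(2) by (simp add: fp_diff)
    qed
    then have "coeff (fp k ?d) (row_exp k j) = 0" for j by simp
    then have "j < k \<Longrightarrow> xs ! j = ys ! j" for j using coeff_fp_row[OF k2, of j ?d] by simp
    then show "xs = ys" using xs ys by (auto simp: L_def intro: nth_equalityI)
  qed
  have cardC: "card C = q ^ k" using CL card_image[OF injg] cardL by simp
  have dim: "code_dim C = k"
    unfolding code_dim_def
  proof (rule the_equality)
    show "card C = card (UNIV::'a set) ^ k" using cardC q_def by simp
    fix m assume "card C = card (UNIV::'a set) ^ m"
    then have "q ^ m = q ^ k" using cardC q_def by simp
    then show "m = k" using q2 by simp
  qed
  define W where "W = {hweight w | w. w \<in> C \<and> (\<exists>x\<in>set w. x \<noteq> 0)}"
  have md: "min_dist C = Min W" by (simp add: min_dist_def W_def)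
  have finW: "finite W"
  proof (rule finite_subset)
    show "W \<subseteq> {..n}"
    proof
      fix x assume "x \<in> W"
      then obtain c where "x = hweight (\<Phi> c)" using Ceq W_def by auto
      then show "x \<in> {..n}" using length_filter_le[of _ "\<Phi> c"] len by (simp add: hweight_def)
    qed
  qed simp
  have wZ: "hweight (\<Phi> c) + card {i. i < n \<and> poly (fp k c) (\<alpha> i) = 0} = n" for c
    unfolding \<Phi>_def by (rule hweight_split)
  have upper: "\<exists>w\<in>W. w \<le> n - k + 1"
  proof -
    have sub: "take (k - 1) ` C \<subseteq> {xs. set xs \<subseteq> UNIV \<and> length xs = k - 1}"
      using Ceq len assms(2) by auto
    have "card (take (k - 1) ` C) \<le> q ^ (k - 1)"
      using card_mono[OF _ sub] card_lists_length_eq[of "UNIV::'a set" "k - 1"] finite_lists_length_eq[of "UNIV::'a set" "k - 1"] q_def by simp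
    also have "\<dots> < q ^ k" using q2 k2 by (simp add: power_strict_increasing)
    finally have "card (take (k - 1) ` C) < card C" using cardC by simp
    then have "\<not> inj_on (take (k - 1)) C" using card_image by (metis less_irrefl)
    then obtain w w' where ww: "w \<in> C" "w' \<in> C" "w \<noteq> w'" "take (k - 1) w = take (k - 1) w'"
      unfolding inj_on_def by blast
    obtain c c' where cc: "w = \<Phi> c" "w' = \<Phi> c'" using ww Ceq by auto
    define e where "e j = c j - c' j" for j
    have fpe: "fp k e = fp k c - fp k c'" unfolding e_def by (rule fp_diff)
    have nthe: "i < n \<Longrightarrow> \<Phi> e ! i = w ! i - w' ! i" for i
      using nth\<Phi>[of i e] nth\<Phi>[of i c] nth\<Phi>[of i c'] fpe cc by simp
    have "\<exists>i<n. w ! i \<noteq> w' ! i"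
    proof (rule ccontr)
      assume "\<not> (\<exists>i<n. w ! i \<noteq> w' ! i)"
      then have "w = w'" using cc len by (intro nth_equalityI) auto
      then show False using ww(3) by simp
    qed
    then obtain i where i: "i < n" "w ! i \<noteq> w' ! i" by blast
    have "\<Phi> e ! i \<in> set (\<Phi> e)" using i len by simp
    moreover have "\<Phi> e ! i \<noteq> 0" using nthe i by simp
    ultimately have "\<exists>x\<in>set (\<Phi> e). x \<noteq> 0" by blast
    then have inW: "hweight (\<Phi> e) \<in> W" unfolding W_def using Ceq by auto
    have "{i. i < n \<and> poly (fp k e) (\<alpha> i) \<noteq> 0} \<subseteq> {k - 1..<n}"
    proof
      fix j assume j: "j \<in> {i. i < n \<and> poly (fp k e) (\<alpha> i) \<noteq> 0}"
      have "\<not> j < k - 1"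
      proof
        assume jk: "j < k - 1"
        have "w ! j = w' ! j" using ww(4) jk by (metis nth_take)
        then show False using j nthe[of j] nth\<Phi>[of j e] by simp
      qed
      then show "j \<in> {k - 1..<n}" using j by simp
    qed
    then have "card {i. i < n \<and> poly (fp k e) (\<alpha> i) \<noteq> 0} \<le> card {k - 1..<n}"
      by (rule card_mono[rotated]) simp
    then have "hweight (\<Phi> e) \<le> n - k + 1"
      unfolding \<Phi>_def hweight_map by simp
    then show ?thesis using inW by blast
  qed
  have Wne: "W \<noteq> {}" using upper by blast
  show ?thesis
  proof
    assume mds: "is_MDS n (code_C n k \<alpha>)"
    then have mdv: "Min W = n - k + 1" using md dim by (simp add: is_MDS_def C_def)
    show "\<forall>B. B \<subseteq> \<alpha> ` {..<n} \<and> card B = k \<longrightarrow> (esym 2 B)^2 - esym 1 B * esym 3 B \<noteq> 0"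
    proof (intro allI impI notI)
      fix B assume B: "B \<subseteq> \<alpha> ` {..<n} \<and> card B = k" and D: "(esym 2 B)^2 - esym 1 B * esym 3 B = 0"
      have fB: "finite B" by simp
      obtain f where f: "f \<noteq> 0" "degree f \<le> k + 1" "coeff f (k - 2) = 0" "coeff f (k - 1) = 0"
          "\<forall>b\<in>B. poly f b = 0"
      proof -
        have "card B = k" using B by simp
        then show ?thesis using key[OF fB _ assms(1)] D that by blast
      qed
      define c where "c j = coeff f (row_exp k j)" for j
      have fc: "f = fp k c" unfolding c_def by (rule span_fp[OF k2 f(2-4)])
      have "\<exists>x\<in>set (\<Phi> c). x \<noteq> 0" using nz f(1) fc setnz by blast
      then have inW: "hweight (\<Phi> c) \<in> W" unfolding W_def using Ceq by auto
      define I where "I = {i. i < n \<and> \<alpha> i \<in> B}"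
      have "\<alpha> ` I = B" using B by (auto simp: I_def)
      moreover have "inj_on \<alpha> I" using assms(4) by (rule inj_on_subset) (auto simp: I_def)
      ultimately have cI: "card I = k" using B card_image[of \<alpha> I] by simp
      have "I \<subseteq> {i. i < n \<and> poly (fp k c) (\<alpha> i) = 0}" using f(5) fc by (auto simp: I_def)
      then have "k \<le> card {i. i < n \<and> poly (fp k c) (\<alpha> i) = 0}"
        using cI card_mono[of "{i. i < n \<and> poly (fp k c) (\<alpha> i) = 0}" I] by simp
      then have "hweight (\<Phi> c) \<le> n - k" using wZ[of c] by simp
      then have "Min W \<le> n - k" using Min_le[OF finW inW] by simp
      then show False using mdv assms(2) by simp
    qed
  next
    assume good: "\<forall>B. B \<subseteq> \<alpha> ` {..<n} \<and> card B = k \<longrightarrow> (esym 2 B)^2 - esym 1 B * esym 3 B \<noteq> 0"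
    have lower: "n - k + 1 \<le> x" if "x \<in> W" for x
    proof -
      obtain w where w: "x = hweight w" "w \<in> C" "\<exists>x\<in>set w. x \<noteq> 0" using \<open>x \<in> W\<close> W_def by auto
      obtain c where wc: "w = \<Phi> c" using w Ceq by auto
      define Z where "Z = {i. i < n \<and> poly (fp k c) (\<alpha> i) = 0}"
      have fnz: "fp k c \<noteq> 0" using w(3) wc setnz by auto
      have "card Z < k"
      proof (rule ccontr)
        assume "\<not> card Z < k"
        moreover have "finite Z" by (simp add: Z_def)
        ultimately have "k \<le> card Z" by simp
        then obtain Z' where Z': "Z' \<subseteq> Z" "card Z' = k" "finite Z'"
          by (rule obtain_subset_with_card_n)
        define B where "B = \<alpha> ` Z'"
        have "inj_on \<alpha> Z'" using assms(4) by (rule inj_on_subset) (use Z' in \<open>auto simp: Z_def\<close>)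
        then have cB: "card B = k" using Z'(2) card_image[of \<alpha> Z'] unfolding B_def by simp
        have BS: "B \<subseteq> \<alpha> ` {..<n}" using Z' by (auto simp: B_def Z_def)
        have fB: "finite B" by simp
        have "\<exists>f. f \<noteq> 0 \<and> degree f \<le> k + 1 \<and> coeff f (k - 2) = 0 \<and> coeff f (k - 1) = 0
            \<and> (\<forall>b\<in>B. poly f b = 0)"
        proof (rule exI[of _ "fp k c"], intro conjI)
          show "\<forall>b\<in>B. poly (fp k c) b = 0" using Z'(1) by (auto simp: B_def Z_def)
          show "fp k c \<noteq> 0" by (rule fnz)
          show "degree (fp k c) \<le> k + 1" by (rule fp_props(1)[OF k2])
          show "coeff (fp k c) (k - 2) = 0" by (rule fp_props(2)[OF k2])
          show "coeff (fp k c) (k - 1) = 0" by (rule fp_props(3)[OF k2])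
        qed
        then have "(esym 2 B)^2 - esym 1 B * esym 3 B = 0" by (rule key[OF fB cB assms(1), THEN iffD1])
        then show False using good BS cB by blast
      qed
      moreover have h: "hweight (\<Phi> c) + card Z = n" using wZ[of c] by (simp add: Z_def)
      moreover have "x = hweight (\<Phi> c)" using w(1) wc by simp
      moreover have "k \<le> n" using assms(2) by simp
      ultimately show ?thesis using arith_help by blast
    qed
    have "Min W = n - k + 1"
    proof (rule antisym)
      obtain w where "w \<in> W" "w \<le> n - k + 1" using upper by blast
      then show "Min W \<le> n - k + 1" using Min_le[OF finW, of w] by simp
      have "Min W \<in> W" by (rule Min_in[OF finW Wne])
      then show "n - k + 1 \<le> Min W" by (rule lower)
    qed
    then show "is_MDS n (code_C n k \<alpha>)" using md dim by (simp add: is_MDS_def C_def)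
  qed
qed

end
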